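(* Let $p\geq 3$ and let $\varphi$ be a nonzero short homomorphism of $\mathcal{T}_p$ with associated functionals $\lambda$ (on $\langle w_1,\dots,w_p\rangle$) and $\mu$ (on $\langle\mathfrak{z}_0,\dots,\mathfrak{z}_p\rangle$). Then there exist $k\in\{0,1,\dots,p\}$ and $\alpha\in\mathbb{F}$, $\alpha\neq0$, such that $\lambda=\alpha\lambda_k$ and $\mu=\alpha^2\mu_k$, where: $\lambda_0(w_i)=1$ for $1\le i\le p$, $\mu_0(\mathfrak{z}_0)=1$, $\mu_0(\mathfrak{z}_i)=0$ for $1\le i\le p$; and for $1\le k\le p$, $\lambda_k(w_j)=\delta_{kj}$, $\mu_k(\mathfrak{z}_0)=0$, $\mu_k(\mathfrak{z}_j)=\delta_{kj}$ for $1\le j\le p$. Conversely each pair $(\lambda_k,\mu_k)$ defines a short homomorphism.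
   Context: $\mathbb{F}$ is a field of characteristic not $2$. $\mathcal{T}_p$ is the normal algebra over $\mathbb{F}$ with $U$-space having basis $w_1,\dots,w_p$ and $\mathfrak{Z}$-space having basis $\mathfrak{z}_0,\mathfrak{z}_1,\dots,\mathfrak{z}_p$, commutative bilinear product given by $w_iw_j=\mathfrak{z}_0+\delta_{ij}\mathfrak{z}_i$ ($1\le i,j\le p$, $\delta$ the Kronecker delta), and all other basis products $0$. The spline algebra $\mathcal{S}$ has basis $r$ (its $U$-space) and $\mathfrak{s}$ (its $\mathfrak{Z}$-space) with $r^2=\mathfrak{s}$ and all other products $0$. A short homomorphism of a normal algebra $U\oplus\mathfrak{Z}$ is a product-preserving linear map to $\mathcal{S}$ sending $U$ into $\langle r\rangle$ and $\mathfrak{Z}$ into $\langle\mathfrak{s}\rangle$; it has the form $u+\mathfrak{z}\mapsto\lambda(u)r+\mu(\mathfrak{z})\mathfrak{s}$ for linear functionals $\lambda,\mu$ with $\mu(uv)=\lambda(u)\lambda(v)$ for all $u,v\in U$. *)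

theory Defs
  imports Main
begin

text \<open>The normal algebra T_p: an element of the U-space is given by its coordinate
  vector u (u i = coefficient of w_i, 1 \<le> i \<le> p); an element of the Z-space by its
  coordinate vector z (z k = coefficient of z_k, 0 \<le> k \<le> p).  Coordinates outside
  these ranges are ignored.\<close>

text \<open>Z-coordinates of the product u v in T_p, from w_i w_j = z_0 + delta_ij z_i.\<close>
definition Tp_prod :: "nat \<Rightarrow> (nat \<Rightarrow> 'a::field) \<Rightarrow> (nat \<Rightarrow> 'a) \<Rightarrow> (nat \<Rightarrow> 'a)" where
  "Tp_prod p u v = (\<lambda>k. if k = 0 then (\<Sum>i=1..p. u i) * (\<Sum>j=1..p. v j)
                        else if k \<le> p then u k * v k else 0)"

definition lam_val :: "nat \<Rightarrow> (nat \<Rightarrow> 'a::field) \<Rightarrow> (nat \<Rightarrow> 'a) \<Rightarrow> 'a" where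
  "lam_val p l u = (\<Sum>i=1..p. l i * u i)"

definition mu_val :: "nat \<Rightarrow> (nat \<Rightarrow> 'a::field) \<Rightarrow> (nat \<Rightarrow> 'a) \<Rightarrow> 'a" where
  "mu_val p m z = (\<Sum>k=0..p. m k * z k)"

definition short_hom :: "nat \<Rightarrow> (nat \<Rightarrow> 'a::field) \<Rightarrow> (nat \<Rightarrow> 'a) \<Rightarrow> bool" where
  "short_hom p l m \<longleftrightarrow>
     (\<forall>u v. mu_val p m (Tp_prod p u v) = lam_val p l u * lam_val p l v)"

definition lamk :: "nat \<Rightarrow> nat \<Rightarrow> 'a::field" where
  "lamk k = (\<lambda>j. if k = 0 then 1 else if j = k then 1 else 0)"

definition muk :: "nat \<Rightarrow> nat \<Rightarrow> 'a::field" where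
  "muk k = (\<lambda>j. if k = 0 then (if j = 0 then 1 else 0)
               else (if j = k then 1 else 0))"

end

theory Submission
  imports Defs
begin

lemma key:
  fixes l m :: "nat \<Rightarrow> 'a::field"
  assumes h: "short_hom p l m" and i: "1 \<le> i" "i \<le> p" and j: "1 \<le> j" "j \<le> p"
  shows "m 0 + (if i = j then m i else 0) = l i * l j"
proof -
  define ei where "ei = (\<lambda>k. if k = i then (1::'a) else 0)"
  define ej where "ej = (\<lambda>k. if k = j then (1::'a) else 0)"
  have s1: "(\<Sum>k=1..p. ei k) = 1" using i unfolding ei_def by (simp add: sum.delta)
  have s2: "(\<Sum>k=1..p. ej k) = 1" using j unfolding ej_def by (simp add: sum.delta)
  have li: "lam_val p l ei = l i" using i unfolding lam_val_def ei_def
    by (simp add: if_distrib sum.delta cong: if_cong)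
  have lj: "lam_val p l ej = l j" using j unfolding lam_val_def ej_def
    by (simp add: if_distrib sum.delta cong: if_cong)
  have "mu_val p m (Tp_prod p ei ej) = m 0 * Tp_prod p ei ej 0 + (\<Sum>k=1..p. m k * Tp_prod p ei ej k)"
    unfolding mu_val_def by (simp add: sum.atLeast_Suc_atMost)
  also have "(\<Sum>k=1..p. m k * Tp_prod p ei ej k) = (\<Sum>k=1..p. m k * (ei k * ej k))"
    by (rule sum.cong) (auto simp: Tp_prod_def)
  also have "\<dots> = (\<Sum>k=1..p. if k = i then (if i = j then m i else 0) else 0)"
    by (rule sum.cong) (auto simp: ei_def ej_def)
  also have "\<dots> = (if i = j then m i else 0)"
    using i by (simp add: sum.delta)
  also have "Tp_prod p ei ej 0 = 1" using s1 s2 by (simp add: Tp_prod_def)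
  finally have "mu_val p m (Tp_prod p ei ej) = m 0 + (if i = j then m i else 0)" by simp
  moreover have "mu_val p m (Tp_prod p ei ej) = lam_val p l ei * lam_val p l ej"
    using h unfolding short_hom_def by blast
  ultimately show ?thesis using li lj by simp
qed

lemma lam_scale:
  assumes "\<forall>i\<in>{1..p}. l i = \<alpha> * l' i"
  shows "lam_val p l u = \<alpha> * lam_val p l' u"
  unfolding lam_val_def sum_distrib_left
  by (rule sum.cong) (use assms in auto)

lemma mu_scale:
  assumes "\<forall>i\<in>{0..p}. m i = \<alpha> * m' i"
  shows "mu_val p m u = \<alpha> * mu_val p m' u"
  unfolding mu_val_def sum_distrib_left
  by (rule sum.cong) (use assms in auto)

theorem lemma7p1:
  fixes p :: nat and l m :: "nat \<Rightarrow> 'a::field"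
  assumes char: "(2::'a) \<noteq> 0"
    and p3: "p \<ge> 3"
  shows "(short_hom p l m \<and> (\<exists>u z. lam_val p l u \<noteq> 0 \<or> mu_val p m z \<noteq> 0)
            \<longrightarrow> (\<exists>k\<in>{0..p}. \<exists>\<alpha>::'a. \<alpha> \<noteq> 0 \<and>
                  (\<forall>u. lam_val p l u = \<alpha> * lam_val p (lamk k) u) \<and>
                  (\<forall>z. mu_val p m z = \<alpha>^2 * mu_val p (muk k) z)))
         \<and> (\<forall>k\<in>{0..p}. short_hom p (lamk k :: nat \<Rightarrow> 'a) (muk k))"
proof (intro conjI impI ballI)
  fix k assume k: "k \<in> {0..p}"
  show "short_hom p (lamk k :: nat \<Rightarrow> 'a) (muk k)"
    unfolding short_hom_def
  proof (intro allI)
    fix u v :: "nat \<Rightarrow> 'a"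
    show "mu_val p (muk k) (Tp_prod p u v) = lam_val p (lamk k) u * lam_val p (lamk k) v"
    proof (cases "k = 0")
      case True
      then show ?thesis unfolding mu_val_def lam_val_def muk_def lamk_def
        by (simp add: sum.atLeast_Suc_atMost Tp_prod_def)
    next
      case False
      then have "1 \<le> k" "k \<le> p" using k by auto
      have e1: "mu_val p (muk k) (Tp_prod p u v) = (\<Sum>i=0..p. if i = k then u k * v k else 0)"
        unfolding mu_val_def using False \<open>k \<le> p\<close> by (intro sum.cong refl) (simp add: muk_def Tp_prod_def)
      have e2: "lam_val p (lamk k) w = (\<Sum>i=1..p. if i = k then w k else 0)" for w
        unfolding lam_val_def using False by (intro sum.cong refl) (simp add: lamk_def)
      show ?thesis unfolding e1 e2 using \<open>1 \<le> k\<close> \<open>k \<le> p\<close> by (simp add: sum.delta)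
    qed
  qed
next
  assume A: "short_hom p l m \<and> (\<exists>u z. lam_val p l u \<noteq> 0 \<or> mu_val p m z \<noteq> 0)"
  then have h: "short_hom p l m" and nz: "\<exists>u z. lam_val p l u \<noteq> 0 \<or> mu_val p m z \<noteq> 0" by auto
  have off: "m 0 = l i * l j" if "1 \<le> i" "i \<le> p" "1 \<le> j" "j \<le> p" "i \<noteq> j" for i j
    using key[OF h that(1-4)] that(5) by simp
  have diag: "m 0 + m i = l i * l i" if "1 \<le> i" "i \<le> p" for i
    using key[OF h that that] by simp
  show "\<exists>k\<in>{0..p}. \<exists>\<alpha>::'a. \<alpha> \<noteq> 0 \<and>
                  (\<forall>u. lam_val p l u = \<alpha> * lam_val p (lamk k) u) \<and>
                  (\<forall>z. mu_val p m z = \<alpha>^2 * mu_val p (muk k) z)"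
  proof (cases "m 0 = 0")
    case False
    have lnz: "l i \<noteq> 0" if "1 \<le> i" "i \<le> p" for i
    proof -
      define j where "j = (if i = 1 then 2 else 1::nat)"
      have "1 \<le> j" "j \<le> p" "i \<noteq> j" using p3 that by (auto simp: j_def)
      then show ?thesis using off[OF that \<open>1 \<le> j\<close> \<open>j \<le> p\<close> \<open>i \<noteq> j\<close>] False by auto
    qed
    have leq: "l i = l 1" if "1 \<le> i" "i \<le> p" for i
    proof (cases "i = 1")
      case False
      define t where "t = (if i = 2 then 3 else 2::nat)"
      have t: "1 \<le> t" "t \<le> p" "t \<noteq> 1" "t \<noteq> i" using p3 that by (auto simp: t_def)
      have "m 0 = l t * l 1" using off[OF t(1,2), of 1] t p3 by auto
      moreover have "m 0 = l t * l i" using off[OF t(1,2) that] t by auto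
      ultimately have "l t * l i = l t * l 1" by simp
      then show ?thesis using lnz[OF t(1,2)] by simp
    qed simp
    have m0: "m 0 = l 1 * l 1" using off[of 1 2] leq[of 2] p3 by auto
    have mi: "m i = 0" if "1 \<le> i" "i \<le> p" for i
      using diag[OF that] leq[OF that] m0 by simp
    show ?thesis
    proof (intro bexI[of _ 0] exI[of _ "l 1"] conjI allI)
      show "l 1 \<noteq> 0" using lnz[of 1] p3 by auto
      fix u show "lam_val p l u = l 1 * lam_val p (lamk 0) u"
        proof (rule lam_scale, intro ballI)
          fix i :: nat assume "i \<in> {1..p}"
          then have "l i = l 1" using leq[of i] by auto
          then show "l i = l 1 * lamk 0 i" by (simp add: lamk_def)
        qed
    next
      fix z show "mu_val p m z = (l 1)^2 * mu_val p (muk 0) z"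
        by (rule mu_scale) (auto simp: muk_def m0 mi power2_eq_square)
    qed simp
  next
    case True
    show ?thesis
    proof (cases "\<exists>k. 1 \<le> k \<and> k \<le> p \<and> l k \<noteq> 0")
      case False
      then have l0: "l i = 0" if "1 \<le> i" "i \<le> p" for i using that by auto
      have m0': "m i = 0" if "i \<le> p" for i
        using True diag[of i] l0[of i] that by (cases "i = 0") auto
      have "lam_val p l u = 0" for u unfolding lam_val_def by (rule sum.neutral) (auto simp: l0)
      moreover have "mu_val p m z = 0" for z unfolding mu_val_def by (rule sum.neutral) (auto simp: m0')
      ultimately show ?thesis using nz by auto
    next
      case True2: True
      then obtain k where k: "1 \<le> k" "k \<le> p" "l k \<noteq> 0" by auto
      have lo: "l i = 0" if "1 \<le> i" "i \<le> p" "i \<noteq> k" for i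
        using off[OF k(1,2) that(1,2)] that(3) True k(3) by auto
      have mk: "m k = l k * l k" using diag[OF k(1,2)] True by simp
      have mo: "m i = 0" if "1 \<le> i" "i \<le> p" "i \<noteq> k" for i
        using diag[OF that(1,2)] lo[OF that] True by simp
      show ?thesis
      proof (intro bexI[of _ k] exI[of _ "l k"] conjI allI)
        show "l k \<noteq> 0" by fact
        fix u show "lam_val p l u = l k * lam_val p (lamk k) u"
          by (rule lam_scale) (use k lo in \<open>auto simp: lamk_def\<close>)
      next
        fix z show "mu_val p m z = (l k)^2 * mu_val p (muk k) z"
        proof (rule mu_scale, intro ballI)
          fix i assume "i \<in> {0..p}"
          then show "m i = (l k)^2 * muk k i"
            using k mk mo[of i] True by (cases "i = 0") (auto simp: muk_def power2_eq_square)
        qed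
      qed (use k in auto)
    qed
  qed
qed

end
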